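(* Let $\mathbb{K}$ be a field, $S=\mathbb{K}[x_1,\ldots,x_n]$, and let $I\subseteq S$ be a support-$2$ monomial ideal which is a Simis ideal and whose irreducible decomposition is minimal. Assume that $\alpha_{i,j}=1$ for every edge $\{x_i,x_j\}$ of $G(I)$. Then there exist a Simis square-free monomial ideal $J\subseteq S$ and a standard linear weighting $w$ of $S$ such that $I=J_w$.
   Context: For a monomial ideal $I$, $\mathcal{G}(I)$ denotes its minimal set of monomial generators. $I$ is a support-$2$ monomial ideal if $\mathcal{G}(I)\subseteq\{x_i^ax_j^b : 1\le i<j\le n,\ a,b\ge 1\}$. The underlying simple graph $G(I)$ has vertices $x_1,\ldots,x_n$ and an edge $\{x_i,x_j\}$ whenever some element of $\mathcal{G}(I)$ has support $\{x_i,x_j\}$. For an edge $\{x_i,x_j\}$, $\alpha_{i,j}$ is the number of elements of $\mathcal{G}(I)$ whose support is exactly $\{x_i,x_j\}$. Symbolic power: $I^{(s)}=\bigcap_{P\in\mathrm{MinAss}(I)}(I^sS_P\cap S)$ over the minimal primes of $I$; $I$ is Simis if $I^{(s)}=I^s$ for all $s\ge 1$. Irreducible monomial ideals are those generated by pure powers of variables; every monomial ideal has a unique irredundant decomposition $I=\bigcap Q_i$ into irreducible monomial ideals, called minimal if $\sqrt{Q_i}\ne\sqrt{Q_j}$ for $i\neq j$. A standard linear weighting is $w(a_1,\ldots,a_n)=(d_1a_1,\ldots,d_na_n)$ with fixed positive integers $d_i$, and for a monomial ideal $J$, $J_w$ is generated by the monomials obtained from $\mathcal{G}(J)$ by replacing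 each $x_i$ by $x_i^{d_i}$. *)

theory Defs
  imports Main
begin

text \<open>Monomials of S = K[x_0,...,x_{n-1}] are exponent vectors nat => nat vanishing
  outside {..<n}. A monomial ideal is represented by the set of monomials it contains
  (it is spanned over K by them); all notions below are the monomial-level translations.\<close>

definition mons :: "nat \<Rightarrow> (nat \<Rightarrow> nat) set" where
  "mons n = {a. \<forall>i\<ge>n. a i = 0}"

definition supp :: "(nat \<Rightarrow> nat) \<Rightarrow> nat set" where
  "supp a = {i. a i \<noteq> 0}"

definition is_mono_ideal :: "nat \<Rightarrow> (nat \<Rightarrow> nat) set \<Rightarrow> bool" where
  "is_mono_ideal n I \<longleftrightarrow> I \<subseteq> mons n \<and> (\<forall>a\<in>I. \<forall>b\<in>mons n. a \<le> b \<longrightarrow> b \<in> I)"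

definition ideal_of :: "nat \<Rightarrow> (nat \<Rightarrow> nat) set \<Rightarrow> (nat \<Rightarrow> nat) set" where
  "ideal_of n G = {m \<in> mons n. \<exists>g\<in>G. g \<le> m}"

definition mingens :: "(nat \<Rightarrow> nat) set \<Rightarrow> (nat \<Rightarrow> nat) set" where
  "mingens I = {g \<in> I. \<forall>h\<in>I. h \<le> g \<longrightarrow> h = g}"

definition support2 :: "nat \<Rightarrow> (nat \<Rightarrow> nat) set \<Rightarrow> bool" where
  "support2 n I \<longleftrightarrow> is_mono_ideal n I \<and> (\<forall>g\<in>mingens I. card (supp g) = 2)"

definition alpha :: "(nat \<Rightarrow> nat) set \<Rightarrow> nat \<Rightarrow> nat \<Rightarrow> nat" where
  "alpha I i j = card {g \<in> mingens I. supp g = {i, j}}"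

definition edges :: "(nat \<Rightarrow> nat) set \<Rightarrow> nat set set" where
  "edges I = supp ` mingens I"

fun mpow :: "nat \<Rightarrow> (nat \<Rightarrow> nat) set \<Rightarrow> nat \<Rightarrow> (nat \<Rightarrow> nat) set" where
  "mpow n I 0 = mons n"
| "mpow n I (Suc s) = {(\<lambda>i. a i + b i) | a b. a \<in> I \<and> b \<in> mpow n I s}"

definition primeA :: "nat \<Rightarrow> nat set \<Rightarrow> (nat \<Rightarrow> nat) set" where
  "primeA n A = {m \<in> mons n. \<exists>i\<in>A. m i \<noteq> 0}"

text \<open>minimal primes of a monomial ideal (these are the minimal monomial primes containing it)\<close>
definition minprimes :: "nat \<Rightarrow> (nat \<Rightarrow> nat) set \<Rightarrow> nat set set" where
  "minprimes n I = {A. A \<subseteq> {..<n} \<and> I \<subseteq> primeA n A \<and>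
                      (\<forall>B. B \<subset> A \<longrightarrow> \<not> I \<subseteq> primeA n B)}"

text \<open>J S_P \<inter> S for P = P_A: monomials m with v*m in J for some monomial v not in P\<close>
definition localize :: "nat \<Rightarrow> nat set \<Rightarrow> (nat \<Rightarrow> nat) set \<Rightarrow> (nat \<Rightarrow> nat) set" where
  "localize n A J = {m \<in> mons n. \<exists>v\<in>mons n. (\<forall>i\<in>A. v i = 0) \<and> (\<lambda>i. m i + v i) \<in> J}"

definition symb_pow :: "nat \<Rightarrow> (nat \<Rightarrow> nat) set \<Rightarrow> nat \<Rightarrow> (nat \<Rightarrow> nat) set" where
  "symb_pow n I s = mons n \<inter> (\<Inter>A\<in>minprimes n I. localize n A (mpow n I s))"

definition simis :: "nat \<Rightarrow> (nat \<Rightarrow> nat) set \<Rightarrow> bool" where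
  "simis n I \<longleftrightarrow> (\<forall>s\<ge>1. symb_pow n I s = mpow n I s)"

definition irreducible_mono :: "nat \<Rightarrow> (nat \<Rightarrow> nat) set \<Rightarrow> bool" where
  "irreducible_mono n Q \<longleftrightarrow> (\<exists>G. finite G \<and> G \<noteq> {} \<and> G \<subseteq> mons n \<and>
       (\<forall>g\<in>G. card (supp g) = 1) \<and> Q = ideal_of n G)"

definition radical :: "nat \<Rightarrow> (nat \<Rightarrow> nat) set \<Rightarrow> (nat \<Rightarrow> nat) set" where
  "radical n Q = {m \<in> mons n. \<exists>k\<ge>1. (\<lambda>i. k * m i) \<in> Q}"

definition minimal_irr_decomp :: "nat \<Rightarrow> (nat \<Rightarrow> nat) set \<Rightarrow> bool" where
  "minimal_irr_decomp n I \<longleftrightarrow> (\<exists>\<Q>. finite \<Q> \<and> (\<forall>Q\<in>\<Q>. irreducible_mono n Q) \<and>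
      I = mons n \<inter> \<Inter>\<Q> \<and>
      (\<forall>Q\<in>\<Q>. I \<noteq> mons n \<inter> \<Inter>(\<Q> - {Q})) \<and>
      (\<forall>Q1\<in>\<Q>. \<forall>Q2\<in>\<Q>. Q1 \<noteq> Q2 \<longrightarrow> radical n Q1 \<noteq> radical n Q2))"

definition squarefree_mono :: "nat \<Rightarrow> (nat \<Rightarrow> nat) set \<Rightarrow> bool" where
  "squarefree_mono n J \<longleftrightarrow> is_mono_ideal n J \<and> (\<forall>g\<in>mingens J. \<forall>i. g i \<le> 1)"

definition weighted :: "nat \<Rightarrow> (nat \<Rightarrow> nat) \<Rightarrow> (nat \<Rightarrow> nat) set \<Rightarrow> (nat \<Rightarrow> nat) set" where
  "weighted n d J = ideal_of n ((\<lambda>g i. d i * g i) ` mingens J)"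

end

theory Submission
  imports Defs
begin

definition wt :: "(nat \<Rightarrow> nat) \<Rightarrow> (nat \<Rightarrow> nat) \<Rightarrow> (nat \<Rightarrow> nat)" where
  "wt d b = (\<lambda>l. d l * b l)"

definition Rel :: "nat \<Rightarrow> (nat \<Rightarrow> nat) \<Rightarrow> (nat \<Rightarrow> nat) set \<Rightarrow> (nat \<Rightarrow> nat) set \<Rightarrow> bool" where
  "Rel n d K1 K2 \<longleftrightarrow> (\<forall>b'\<in>mons n. b' \<in> K2 \<longleftrightarrow> (\<exists>b\<in>K1. wt d b \<le> b'))"

lemma wt_mons: "b \<in> mons n \<Longrightarrow> wt d b \<in> mons n"
  by (simp add: mons_def wt_def)

lemma mpow_ideal: "is_mono_ideal n K \<Longrightarrow> is_mono_ideal n (mpow n K s)"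
proof (induction s)
  case 0 then show ?case by (simp add: is_mono_ideal_def)
next
  case (Suc s)
  show ?case unfolding is_mono_ideal_def
  proof (intro conjI ballI impI subsetI)
    fix x assume "x \<in> mpow n K (Suc s)"
    then obtain a b where x: "x = (\<lambda>i. a i + b i)" "a \<in> K" "b \<in> mpow n K s" by auto
    have "a \<in> mons n" "b \<in> mons n" using x Suc by (auto simp: is_mono_ideal_def)
    then show "x \<in> mons n" using x by (auto simp: mons_def)
  next
    fix x y assume x: "x \<in> mpow n K (Suc s)" and y: "y \<in> mons n" and le: "x \<le> y"
    then obtain a b where ab: "x = (\<lambda>i. a i + b i)" "a \<in> K" "b \<in> mpow n K s" by auto
    define a' where "a' = (\<lambda>i. y i - b i)"
    have pt: "a i + b i \<le> y i" for i using le ab by (auto simp: le_fun_def)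
    have "a \<le> a'" unfolding le_fun_def a'_def
    proof
      fix i show "a i \<le> y i - b i" using pt[of i] by arith
    qed
    moreover have "a' \<in> mons n" using y by (simp add: mons_def a'_def)
    ultimately have "a' \<in> K" using ab Suc.prems by (auto simp: is_mono_ideal_def)
    moreover have "y = (\<lambda>i. a' i + b i)"
    proof
      fix i show "y i = a' i + b i" using pt[of i] unfolding a'_def by arith
    qed
    ultimately show "y \<in> mpow n K (Suc s)" using ab by auto
  qed
qed

lemma mpow_mons: "is_mono_ideal n K \<Longrightarrow> mpow n K s \<subseteq> mons n"
  using mpow_ideal by (auto simp: is_mono_ideal_def)

lemma Rel_mpow:
  assumes K1: "is_mono_ideal n K1" and K2: "is_mono_ideal n K2" and R: "Rel n d K1 K2"
  shows "Rel n d (mpow n K1 s) (mpow n K2 s)"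
proof (induction s)
  case 0
  show ?case unfolding Rel_def
  proof (intro ballI iffI)
    fix b' assume "b' \<in> mons n"
    show "\<exists>b\<in>mpow n K1 0. wt d b \<le> b'"
      by (rule bexI[of _ "\<lambda>_. 0"]) (auto simp: wt_def le_fun_def mons_def)
  qed auto
next
  case (Suc s)
  show ?case unfolding Rel_def
  proof (intro ballI iffI)
    fix b' assume b': "b' \<in> mons n" "b' \<in> mpow n K2 (Suc s)"
    then obtain x y where xy: "b' = (\<lambda>i. x i + y i)" "x \<in> K2" "y \<in> mpow n K2 s" by auto
    have "x \<in> mons n" using xy K2 by (auto simp: is_mono_ideal_def)
    then obtain a where a: "a \<in> K1" "wt d a \<le> x" using R xy unfolding Rel_def by blast
    have "y \<in> mons n" using xy mpow_mons[OF K2] by auto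
    then obtain c where c: "c \<in> mpow n K1 s" "wt d c \<le> y" using Suc xy unfolding Rel_def by blast
    have "(\<lambda>i. a i + c i) \<in> mpow n K1 (Suc s)" using a c by auto
    moreover have "wt d (\<lambda>i. a i + c i) \<le> b'" unfolding le_fun_def
    proof
      fix i
      have "d i * a i \<le> x i" "d i * c i \<le> y i" using a c by (auto simp: le_fun_def wt_def)
      then show "wt d (\<lambda>i. a i + c i) i \<le> b' i" using xy by (simp add: wt_def algebra_simps)
    qed
    ultimately show "\<exists>b\<in>mpow n K1 (Suc s). wt d b \<le> b'" by blast
  next
    fix b' assume b': "b' \<in> mons n" "\<exists>b\<in>mpow n K1 (Suc s). wt d b \<le> b'"
    then obtain a c where ac: "a \<in> K1" "c \<in> mpow n K1 s" "wt d (\<lambda>i. a i + c i) \<le> b'" by auto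
    have pt: "d i * a i + d i * c i \<le> b' i" for i using ac(3) by (auto simp: le_fun_def wt_def algebra_simps)
    have am: "a \<in> mons n" using ac K1 by (auto simp: is_mono_ideal_def)
    have x: "wt d a \<in> K2" using R wt_mons[OF am] ac unfolding Rel_def by blast
    define y where "y = (\<lambda>i. b' i - wt d a i)"
    have ym: "y \<in> mons n" using b' by (simp add: mons_def y_def)
    have "wt d c \<le> y" unfolding le_fun_def
    proof
      fix i show "wt d c i \<le> y i" using pt[of i] unfolding wt_def y_def by arith
    qed
    then have "y \<in> mpow n K2 s" using Suc ym ac unfolding Rel_def by blast
    moreover have "b' = (\<lambda>i. wt d a i + y i)"
    proof
      fix i show "b' i = wt d a i + y i" using pt[of i] unfolding wt_def y_def by arith
    qed
    ultimately show "b' \<in> mpow n K2 (Suc s)" using x by auto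
  qed
qed

lemma Rel_mem:
  assumes K1: "is_mono_ideal n K1" and R: "Rel n d K1 K2" and d: "\<forall>i<n. d i > 0"
    and m: "m \<in> mons n"
  shows "wt d m \<in> K2 \<longleftrightarrow> m \<in> K1"
proof
  assume "m \<in> K1" then show "wt d m \<in> K2" using R wt_mons[OF m] unfolding Rel_def by blast
next
  assume "wt d m \<in> K2"
  then obtain b where b: "b \<in> K1" "wt d b \<le> wt d m" using R wt_mons[OF m] unfolding Rel_def by blast
  have bm: "b \<in> mons n" using b K1 by (auto simp: is_mono_ideal_def)
  have "b \<le> m" unfolding le_fun_def
  proof
    fix i show "b i \<le> m i"
    proof (cases "i < n")
      case True
      then have "d i * b i \<le> d i * m i" "d i > 0" using b d by (auto simp: le_fun_def wt_def)
      then show ?thesis by simp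
    next
      case False then show ?thesis using bm by (simp add: mons_def)
    qed
  qed
  then show "m \<in> K1" using K1 b m by (auto simp: is_mono_ideal_def)
qed

lemma wt_le_aux: "(d::nat) > 0 \<Longrightarrow> d * b \<le> d * m + v \<Longrightarrow> b \<le> m + v"
proof (rule ccontr)
  assume d: "d > 0" and h: "d * b \<le> d * m + v" and "\<not> b \<le> m + v"
  then have "m + v < b" by simp
  then obtain t where t: "b = m + v + Suc t" using less_imp_Suc_add by fastforce
  have "d * b = d * m + d * v + d * Suc t" using t by (simp add: algebra_simps)
  moreover have "d * v \<ge> v" using d by simp
  moreover have "d * Suc t > 0" using d by simp
  ultimately show False using h by linarith
qed

lemma Rel_loc:
  assumes K1: "is_mono_ideal n K1" and R: "Rel n d K1 K2" and d: "\<forall>i<n. d i > 0"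
    and m: "m \<in> mons n"
  shows "wt d m \<in> localize n A K2 \<longleftrightarrow> m \<in> localize n A K1"
proof
  assume "m \<in> localize n A K1"
  then obtain v where v: "v \<in> mons n" "\<forall>i\<in>A. v i = 0" "(\<lambda>i. m i + v i) \<in> K1"
    unfolding localize_def by blast
  have "(\<lambda>i. m i + v i) \<in> mons n" using m v by (simp add: mons_def)
  then have "wt d (\<lambda>i. m i + v i) \<in> K2" using Rel_mem[OF K1 R d] v by blast
  moreover have eq: "wt d (\<lambda>i. m i + v i) = (\<lambda>i. wt d m i + wt d v i)" by (simp add: wt_def algebra_simps)
  ultimately have K: "(\<lambda>i. wt d m i + wt d v i) \<in> K2" by (simp only:)
  have Z: "\<forall>i\<in>A. wt d v i = 0" using v(2) by (simp add: wt_def)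
  show "wt d m \<in> localize n A K2" unfolding localize_def
  proof (intro CollectI conjI bexI[of _ "wt d v"])
    show "wt d m \<in> mons n" using wt_mons[OF m] .
    show "wt d v \<in> mons n" using wt_mons[OF v(1)] .
  qed (use K Z in auto)
next
  assume "wt d m \<in> localize n A K2"
  then obtain v where v: "v \<in> mons n" "\<forall>i\<in>A. v i = 0" "(\<lambda>i. wt d m i + v i) \<in> K2"
    unfolding localize_def by blast
  have mv: "(\<lambda>i. wt d m i + v i) \<in> mons n" using wt_mons[OF m] v by (simp add: mons_def)
  then obtain b where b: "b \<in> K1" "wt d b \<le> (\<lambda>i. wt d m i + v i)" using R v unfolding Rel_def by blast
  have bm: "b \<in> mons n" using b K1 by (auto simp: is_mono_ideal_def)
  have "b \<le> (\<lambda>i. m i + v i)" unfolding le_fun_def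
  proof
    fix i show "b i \<le> m i + v i"
    proof (cases "i < n")
      case True
      then have "d i * b i \<le> d i * m i + v i" "d i > 0" using b d by (auto simp: le_fun_def wt_def)
      then show ?thesis using wt_le_aux by blast
    next
      case False then show ?thesis using bm by (simp add: mons_def)
    qed
  qed
  moreover have "(\<lambda>i. m i + v i) \<in> mons n" using m v by (simp add: mons_def)
  ultimately have "(\<lambda>i. m i + v i) \<in> K1" using K1 b by (auto simp: is_mono_ideal_def)
  then show "m \<in> localize n A K1" unfolding localize_def using m v by blast
qed

lemma Rel_prime:
  assumes K1: "is_mono_ideal n K1" and R: "Rel n d K1 K2" and d: "\<forall>i<n. d i > 0"
    and K2: "is_mono_ideal n K2"
  shows "K2 \<subseteq> primeA n A \<longleftrightarrow> K1 \<subseteq> primeA n A"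
proof
  assume h: "K2 \<subseteq> primeA n A"
  show "K1 \<subseteq> primeA n A"
  proof
    fix m assume m: "m \<in> K1"
    then have mm: "m \<in> mons n" using K1 by (auto simp: is_mono_ideal_def)
    then have "wt d m \<in> K2" using Rel_mem[OF K1 R d mm] m by blast
    then obtain i where "i \<in> A" "d i * m i \<noteq> 0" using h by (auto simp: primeA_def wt_def)
    then show "m \<in> primeA n A" using mm by (auto simp: primeA_def)
  qed
next
  assume h: "K1 \<subseteq> primeA n A"
  show "K2 \<subseteq> primeA n A"
  proof
    fix m assume m: "m \<in> K2"
    then have mm: "m \<in> mons n" using K2 by (auto simp: is_mono_ideal_def)
    then obtain b where b: "b \<in> K1" "wt d b \<le> m" using R m unfolding Rel_def by blast
    have bm: "b \<in> mons n" using b K1 by (auto simp: is_mono_ideal_def)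
    have "b \<in> primeA n A" using h b by auto
    then obtain i where i: "i \<in> A" "b i \<noteq> 0" by (auto simp: primeA_def)
    have "i < n"
    proof (rule ccontr)
      assume "\<not> i < n" then have "b i = 0" using bm by (simp add: mons_def)
      then show False using i by simp
    qed
    then have "d i * b i \<le> m i" "d i > 0" using b d by (auto simp: le_fun_def wt_def)
    moreover have "d i * b i > 0" using calculation(2) i(2) by simp
    ultimately have "m i \<noteq> 0" by linarith
    then show "m \<in> primeA n A" using mm i by (auto simp: primeA_def)
  qed
qed

lemma Rel_simis:
  assumes K1: "is_mono_ideal n K1" and K2: "is_mono_ideal n K2" and R: "Rel n d K1 K2"
    and d: "\<forall>i<n. d i > 0" and S: "simis n K2"
  shows "simis n K1"
  unfolding simis_def
proof (intro allI impI)
  fix s :: nat assume s: "s \<ge> 1"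
  have mp: "minprimes n K1 = minprimes n K2"
  proof -
    have P: "\<And>A. (K2 \<subseteq> primeA n A) = (K1 \<subseteq> primeA n A)" using Rel_prime[OF K1 R d K2] .
    show ?thesis unfolding minprimes_def by (simp only: P)
  qed
  have Rs: "Rel n d (mpow n K1 s) (mpow n K2 s)" using Rel_mpow[OF K1 K2 R] .
  have K1s: "is_mono_ideal n (mpow n K1 s)" using mpow_ideal[OF K1] .
  have eq2: "symb_pow n K2 s = mpow n K2 s" using S s by (simp add: simis_def)
  show "symb_pow n K1 s = mpow n K1 s"
  proof (intro set_eqI iffI)
    fix m assume m: "m \<in> symb_pow n K1 s"
    then have mm: "m \<in> mons n" by (simp add: symb_pow_def)
    have "\<forall>A\<in>minprimes n K2. wt d m \<in> localize n A (mpow n K2 s)"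
    proof
      fix A assume "A \<in> minprimes n K2"
      then have "A \<in> minprimes n K1" using mp by simp
      then have "m \<in> localize n A (mpow n K1 s)" using m unfolding symb_pow_def by blast
      then show "wt d m \<in> localize n A (mpow n K2 s)" using Rel_loc[OF K1s Rs d mm] by blast
    qed
    then have "wt d m \<in> symb_pow n K2 s" using wt_mons[OF mm] by (simp add: symb_pow_def)
    then show "m \<in> mpow n K1 s" using eq2 Rel_mem[OF K1s Rs d mm] by simp
  next
    fix m assume m: "m \<in> mpow n K1 s"
    then have mm: "m \<in> mons n" using mpow_mons[OF K1] by auto
    have "m \<in> localize n A (mpow n K1 s)" for A
      unfolding localize_def
    proof (intro CollectI conjI bexI[of _ "\<lambda>_. 0"])
      show "(\<lambda>_. 0) \<in> mons n" by (simp add: mons_def)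
    qed (use m mm in auto)
    then show "m \<in> symb_pow n K1 s" using mm by (simp add: symb_pow_def)
  qed
qed

lemma exists_mingen:
  assumes I: "is_mono_ideal n I" and x: "x \<in> I"
  shows "\<exists>g\<in>mingens I. g \<le> x"
proof -
  let ?P = "\<lambda>y. y \<in> I \<and> y \<le> x"
  let ?mu = "\<lambda>y::nat\<Rightarrow>nat. \<Sum>l<n. y l"
  obtain y where y: "?P y" and ymin: "\<forall>z. ?P z \<longrightarrow> ?mu y \<le> ?mu z"
    using ex_has_least_nat[of ?P x ?mu] x by auto
  have "y \<in> mingens I" unfolding mingens_def
  proof (intro CollectI conjI ballI impI)
    show "y \<in> I" using y by simp
    fix h assume h: "h \<in> I" "h \<le> y"
    have hy: "h l \<le> y l" for l using h by (simp add: le_fun_def)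
    have "?P h" using h y by (auto intro: order_trans)
    then have "?mu y \<le> ?mu h" using ymin by blast
    show "h = y"
    proof (rule ccontr)
      assume "h \<noteq> y"
      then obtain l where l: "h l \<noteq> y l" by auto
      have "l < n"
      proof (rule ccontr)
        assume "\<not> l < n"
        moreover have "h \<in> mons n" "y \<in> mons n" using h y I by (auto simp: is_mono_ideal_def)
        ultimately show False using l by (simp add: mons_def)
      qed
      have "h l < y l" using hy[of l] l by simp
      then have "?mu h < ?mu y"
        using sum_strict_mono_ex1[of "{..<n}" h y] hy \<open>l < n\<close> by blast
      then show False using \<open>?mu y \<le> ?mu h\<close> by simp
    qed
  qed
  then show ?thesis using y by blast
qed

lemma ideal_of_mingens:
  assumes I: "is_mono_ideal n I"
  shows "ideal_of n (mingens I) = I"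
proof
  show "ideal_of n (mingens I) \<subseteq> I"
    using I by (auto simp: ideal_of_def mingens_def is_mono_ideal_def)
  show "I \<subseteq> ideal_of n (mingens I)"
  proof
    fix x assume "x \<in> I"
    then show "x \<in> ideal_of n (mingens I)"
      using exists_mingen[OF I] I by (auto simp: ideal_of_def is_mono_ideal_def)
  qed
qed

lemma ideal_of_ideal: "is_mono_ideal n (ideal_of n G)"
  by (auto simp: is_mono_ideal_def ideal_of_def intro: order_trans)

lemma mingens_antichain:
  assumes E: "E \<subseteq> mons n" and ac: "\<And>x y. x \<in> E \<Longrightarrow> y \<in> E \<Longrightarrow> x \<le> y \<Longrightarrow> x = y"
  shows "mingens (ideal_of n E) = E"
proof
  show "mingens (ideal_of n E) \<subseteq> E"
  proof
    fix x assume x: "x \<in> mingens (ideal_of n E)"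
    then obtain y where y: "y \<in> E" "y \<le> x" by (auto simp: mingens_def ideal_of_def)
    then have "y \<in> ideal_of n E" using E by (auto simp: ideal_of_def)
    then have "y = x" using x y by (auto simp: mingens_def)
    then show "x \<in> E" using y by simp
  qed
  show "E \<subseteq> mingens (ideal_of n E)"
  proof
    fix x assume x: "x \<in> E"
    have "x \<in> ideal_of n E" using x E by (auto simp: ideal_of_def)
    moreover have "h = x" if hh: "h \<in> ideal_of n E" "h \<le> x" for h
    proof -
      obtain y where y: "y \<in> E" "y \<le> h" using hh by (auto simp: ideal_of_def)
      have "y \<le> x" using y(2) hh(2) by (rule order_trans)
      then have "y = x" using ac[OF y(1) x] by blast
      then show "h = x" using antisym[OF hh(2)] y(2) by simp
    qed
    ultimately show "x \<in> mingens (ideal_of n E)" by (auto simp: mingens_def)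
  qed
qed

definition SG :: "(nat \<Rightarrow> nat) set \<Rightarrow> nat set" where
  "SG G = \<Union>(supp ` G)"

lemma pure_supp2:
  assumes "card (supp p) = 1"
  shows "\<exists>l. supp p = {l} \<and> p l \<noteq> 0 \<and> (\<forall>i. i \<noteq> l \<longrightarrow> p i = 0)"
proof -
  obtain l where l: "supp p = {l}" using assms card_1_singletonE by blast
  have "i \<in> supp p \<longleftrightarrow> i = l" for i using l by blast
  then have "p i \<noteq> 0 \<longleftrightarrow> i = l" for i unfolding supp_def by blast
  then show ?thesis using l by blast
qed

lemma ideal_of_primeA:
  assumes pure: "\<forall>p\<in>G. card (supp p) = 1"
  shows "ideal_of n G \<subseteq> primeA n (SG G)"
proof
  fix x assume "x \<in> ideal_of n G"
  then obtain p where p: "p \<in> G" "p \<le> x" "x \<in> mons n" by (auto simp: ideal_of_def)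
  have "card (supp p) = 1" using pure p by blast
  then obtain l where l: "supp p = {l}" "p l \<noteq> 0" using pure_supp2 by blast
  have "p l \<le> x l" using p by (simp add: le_fun_def)
  have "x l \<noteq> 0"
  proof
    assume "x l = 0" then have "p l = 0" using \<open>p l \<le> x l\<close> by simp
    then show False using l by simp
  qed
  then show "x \<in> primeA n (SG G)" using p l by (auto simp: primeA_def SG_def)
qed

lemma radical_irr:
  assumes G: "G \<subseteq> mons n" and pure: "\<forall>p\<in>G. card (supp p) = 1"
  shows "radical n (ideal_of n G) = primeA n (SG G)"
proof
  show "radical n (ideal_of n G) \<subseteq> primeA n (SG G)"
  proof
    fix m assume "m \<in> radical n (ideal_of n G)"
    then obtain k where k: "m \<in> mons n" "k \<ge> 1" "(\<lambda>i. k * m i) \<in> ideal_of n G"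
      by (auto simp: radical_def)
    then obtain p where p: "p \<in> G" "\<And>i. p i \<le> k * m i" by (auto simp: ideal_of_def le_fun_def)
    have "card (supp p) = 1" using pure p by blast
    then obtain l where l: "supp p = {l}" "p l \<noteq> 0" using pure_supp2 by blast
    have "m l \<noteq> 0"
    proof
      assume "m l = 0" then have "p l = 0" using p(2)[of l] by simp
      then show False using l by simp
    qed
    then show "m \<in> primeA n (SG G)" using k p l by (auto simp: primeA_def SG_def)
  qed
  show "primeA n (SG G) \<subseteq> radical n (ideal_of n G)"
  proof
    fix m assume "m \<in> primeA n (SG G)"
    then obtain p l where m: "m \<in> mons n" and p: "p \<in> G" and lp: "l \<in> supp p" and ml: "m l \<noteq> 0"
      by (auto simp: primeA_def SG_def)
    have "card (supp p) = 1" using pure p by blast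
    then obtain l' where l': "supp p = {l'}" "p l' \<noteq> 0" "\<forall>i. i \<noteq> l' \<longrightarrow> p i = 0"
      using pure_supp2 by blast
    have ll: "l' = l" using l' lp by auto
    have km: "(\<lambda>i. p l * m i) \<in> mons n" using m by (simp add: mons_def)
    have "p \<le> (\<lambda>i. p l * m i)" unfolding le_fun_def
    proof
      fix i show "p i \<le> p l * m i"
      proof (cases "i = l")
        case True then show ?thesis using ml by simp
      next
        case False then show ?thesis using l' ll by simp
      qed
    qed
    then have "(\<lambda>i. p l * m i) \<in> ideal_of n G" using km p by (auto simp: ideal_of_def)
    moreover have "p l \<ge> 1" using l' ll by simp
    ultimately show "m \<in> radical n (ideal_of n G)" using m by (auto simp: radical_def)
  qed
qed

lemma ideal_of_up: "x \<in> ideal_of n G \<Longrightarrow> y \<in> mons n \<Longrightarrow> x \<le> y \<Longrightarrow> y \<in> ideal_of n G"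
  unfolding ideal_of_def by (blast intro: order_trans)

lemma sum_fun_mons:
  fixes P :: "'a \<Rightarrow> nat \<Rightarrow> nat"
  assumes "\<forall>Q\<in>F. P Q \<in> mons n"
  shows "(\<lambda>l. \<Sum>Q\<in>F. P Q l) \<in> mons n"
  using assms by (simp add: mons_def)

lemma sum_fun_ge:
  fixes P :: "'a \<Rightarrow> nat \<Rightarrow> nat"
  assumes "finite F" "Q \<in> F"
  shows "P Q \<le> (\<lambda>l. \<Sum>Q\<in>F. P Q l)"
  unfolding le_fun_def
proof
  fix l show "P Q l \<le> (\<Sum>Q\<in>F. P Q l)" using member_le_sum[of Q F "\<lambda>Q. P Q l"] assms by simp
qed

lemma irr_G:
  assumes "irreducible_mono n Q"
  obtains G where "G \<subseteq> mons n" "\<forall>g\<in>G. card (supp g) = 1" "Q = ideal_of n G"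
  using assms unfolding irreducible_mono_def by (elim exE conjE) (rule that)

lemma irr_mons: "irreducible_mono n Q \<Longrightarrow> Q \<subseteq> mons n"
  by (erule irr_G) (simp add: ideal_of_def)

lemma irr_up: "irreducible_mono n Q \<Longrightarrow> x \<in> Q \<Longrightarrow> y \<in> mons n \<Longrightarrow> x \<le> y \<Longrightarrow> y \<in> Q"
  by (erule irr_G) (simp add: ideal_of_up)

lemma comp:
  assumes mid: "minimal_irr_decomp n I" and A: "A \<in> minprimes n I"
  shows "\<exists>G. G \<subseteq> mons n \<and> (\<forall>p\<in>G. card (supp p) = 1) \<and> I \<subseteq> ideal_of n G \<and>
           (\<forall>p\<in>G. \<exists>v\<in>mons n. (\<forall>l\<in>A. v l = 0) \<and> (\<lambda>l. p l + v l) \<in> I)"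
proof -
  obtain QQ where fin: "finite QQ" and irr: "\<forall>Q\<in>QQ. irreducible_mono n Q"
    and Ieq: "I = mons n \<inter> \<Inter>QQ" and "\<forall>Q\<in>QQ. I \<noteq> mons n \<inter> \<Inter>(QQ - {Q})"
    and rad: "\<forall>Q1\<in>QQ. \<forall>Q2\<in>QQ. Q1 \<noteq> Q2 \<longrightarrow> radical n Q1 \<noteq> radical n Q2"
    using mid unfolding minimal_irr_decomp_def by (elim exE conjE) (rule that)
  have IA: "I \<subseteq> primeA n A" and Amin: "\<And>B. B \<subset> A \<Longrightarrow> \<not> I \<subseteq> primeA n B"
    using A unfolding minprimes_def by simp_all
  define out where "out Q \<longleftrightarrow> (\<exists>p\<in>Q. card (supp p) = 1 \<and> supp p \<inter> A = {})" for Q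
  define P where "P Q = (SOME p. p \<in> Q \<and> card (supp p) = 1 \<and> supp p \<inter> A = {})" for Q
  have Pprop: "P Q \<in> Q" "supp (P Q) \<inter> A = {}" if "out Q" for Q
    using someI_ex[OF that[unfolded out_def Bex_def]] unfolding P_def by blast+
  have Qmons: "Q \<subseteq> mons n" if "Q \<in> QQ" for Q
    using irr that irr_mons by blast
  have Qup: "y \<in> Q" if "Q \<in> QQ" "x \<in> Q" "y \<in> mons n" "x \<le> y" for Q x y
    using irr_up[of n Q x y] irr that by blast
  have Pzero: "P Q l = 0" if "out Q" "l \<in> A" for Q l
  proof (rule ccontr)
    assume "P Q l \<noteq> 0" then have "l \<in> supp (P Q)" by (simp add: supp_def)
    then show False using Pprop(2)[OF that(1)] that(2) by blast
  qed
  have inI: "x \<in> I" if "x \<in> mons n" "\<forall>Q\<in>QQ. x \<in> Q" for x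
    unfolding Ieq using that by blast
  have IQ: "I \<subseteq> Q" if "Q \<in> QQ" for Q
    unfolding Ieq using that by blast
  have "\<exists>Q0\<in>QQ. \<not> out Q0"
  proof (rule ccontr)
    assume "\<not> (\<exists>Q0\<in>QQ. \<not> out Q0)"
    then have allout: "\<forall>Q\<in>QQ. out Q" by blast
    define w where "w = (\<lambda>l. \<Sum>Q\<in>QQ. P Q l)"
    have wm: "w \<in> mons n" unfolding w_def
      by (rule sum_fun_mons) (use Pprop allout Qmons in blast)
    have "w \<in> Q" if "Q \<in> QQ" for Q
      using Qup[OF that Pprop(1)[OF allout[rule_format, OF that]] wm] sum_fun_ge[OF fin that, of P]
      unfolding w_def by blast
    then have "w \<in> I" using inI wm by blast
    then have "w \<in> primeA n A" using IA by blast
    then obtain l where l: "l \<in> A" "w l \<noteq> 0" by (auto simp: primeA_def)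
    then have "(\<Sum>Q\<in>QQ. P Q l) \<noteq> 0" by (simp add: w_def)
    have "\<not> (\<forall>Q\<in>QQ. P Q l = 0)"
    proof
      assume "\<forall>Q\<in>QQ. P Q l = 0"
      then have "(\<Sum>Q\<in>QQ. P Q l) = 0" by (rule sum.neutral)
      then show False using \<open>(\<Sum>Q\<in>QQ. P Q l) \<noteq> 0\<close> by simp
    qed
    then obtain Q where Q: "Q \<in> QQ" "P Q l \<noteq> 0" by blast
    have "out Q" using allout Q(1) by blast
    then have "P Q l = 0" using Pzero l(1) by simp
    then show False using Q(2) by simp
  qed
  then obtain Q0 where Q0: "Q0 \<in> QQ" "\<not> out Q0" by blast
  have SGsub: "SG G \<subseteq> A" if hQ: "Q \<in> QQ" "\<not> out Q" "Q = ideal_of n G" "G \<subseteq> mons n"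
    "\<forall>g\<in>G. card (supp g) = 1" for Q G
  proof
    fix l assume "l \<in> SG G"
    then obtain g where g: "g \<in> G" "l \<in> supp g" by (auto simp: SG_def)
    have "g \<in> mons n" using g(1) hQ(4) by blast
    then have "g \<in> ideal_of n G" using g(1) by (auto simp: ideal_of_def)
    then have "g \<in> Q" using hQ(3) by simp
    then have "supp g \<inter> A \<noteq> {}" using hQ(2) hQ(5) g unfolding out_def by blast
    moreover obtain l' where "supp g = {l'}" using hQ(5) g pure_supp2 by blast
    ultimately show "l \<in> A" using g by auto
  qed
  have SGeq: "SG G = A" if hE: "Q \<in> QQ" "\<not> out Q" "Q = ideal_of n G" "G \<subseteq> mons n"
    "\<forall>g\<in>G. card (supp g) = 1" for Q G
  proof -
    have s: "SG G \<subseteq> A" using SGsub[OF hE] .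
    have "I \<subseteq> Q" using IQ hE(1) by blast
    also have "Q \<subseteq> primeA n (SG G)" using ideal_of_primeA[OF hE(5)] hE(3) by simp
    finally have "I \<subseteq> primeA n (SG G)" .
    then show ?thesis using Amin s by blast
  qed
  have "irreducible_mono n Q0" using irr Q0(1) by blast
  then obtain G0 where G0: "G0 \<subseteq> mons n" "\<forall>g\<in>G0. card (supp g) = 1" "Q0 = ideal_of n G0"
    by (rule irr_G)
  have others: "out Q" if "Q \<in> QQ" "Q \<noteq> Q0" for Q
  proof (rule ccontr)
    assume no: "\<not> out Q"
    have "irreducible_mono n Q" using irr that(1) by blast
    then obtain G where G: "G \<subseteq> mons n" "\<forall>g\<in>G. card (supp g) = 1" "Q = ideal_of n G"
      by (rule irr_G)
    have "radical n Q = primeA n A"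
      using radical_irr[OF G(1) G(2)] SGeq[OF that(1) no G(3) G(1) G(2)] G(3) by simp
    moreover have "radical n Q0 = primeA n A"
      using radical_irr[OF G0(1) G0(2)] SGeq[OF Q0(1) Q0(2) G0(3) G0(1) G0(2)] G0(3) by simp
    ultimately show False using rad that Q0(1) by blast
  qed
  show ?thesis
  proof (intro exI conjI ballI)
    show "G0 \<subseteq> mons n" using G0 by simp
    show "card (supp p) = 1" if "p \<in> G0" for p using G0 that by blast
    show "I \<subseteq> ideal_of n G0" using IQ[OF Q0(1)] G0(3) by simp
  next
    fix p assume p: "p \<in> G0"
    define v where "v = (\<lambda>l. \<Sum>Q\<in>QQ - {Q0}. P Q l)"
    have vm: "v \<in> mons n" unfolding v_def
      by (rule sum_fun_mons) (use Pprop others Qmons in blast)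
    have vA: "\<forall>l\<in>A. v l = 0" unfolding v_def using Pzero others by simp
    have pm: "p \<in> mons n" using p G0 by blast
    have pvm: "(\<lambda>l. p l + v l) \<in> mons n" using pm vm by (simp add: mons_def)
    have "(\<lambda>l. p l + v l) \<in> Q" if "Q \<in> QQ" for Q
    proof (cases "Q = Q0")
      case True
      have "p \<in> Q0" using p pm G0(3) by (auto simp: ideal_of_def)
      moreover have "p \<le> (\<lambda>l. p l + v l)" by (simp add: le_fun_def)
      ultimately show ?thesis using Qup[OF that] pvm True by blast
    next
      case False
      have oQ: "out Q" using others that False by blast
      have "P Q \<le> v" unfolding v_def using sum_fun_ge[of "QQ - {Q0}" Q P] fin that False by blast
      then have "P Q \<le> (\<lambda>l. p l + v l)" by (auto simp: le_fun_def intro: le_add2 order_trans)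
      then show ?thesis using Qup[OF that Pprop(1)[OF oQ] pvm] by blast
    qed
    then show "\<exists>v\<in>mons n. (\<forall>l\<in>A. v l = 0) \<and> (\<lambda>l. p l + v l) \<in> I"
      using vm vA inI pvm by blast
  qed
qed

lemma supp_iff: "supp g = S \<Longrightarrow> (g l \<noteq> 0 \<longleftrightarrow> l \<in> S)"
proof -
  assume "supp g = S"
  then have "l \<in> supp g \<longleftrightarrow> l \<in> S" by simp
  then show ?thesis unfolding supp_def by simp
qed

lemma uniq:
  assumes S2: "support2 n I" and edge: "\<forall>e\<in>edges I. \<forall>i j. e = {i, j} \<longrightarrow> alpha I i j = 1"
    and g: "g \<in> mingens I" and g': "g' \<in> mingens I" and eq: "supp g = supp g'"
  shows "g = g'"
proof -
  have "card (supp g) = 2" using S2 g unfolding support2_def by blast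
  then obtain i j where ij: "supp g = {i, j}" unfolding card_2_iff by (elim exE conjE) (erule that)
  have "supp g \<in> edges I" using g unfolding edges_def by blast
  then have "alpha I i j = 1" using edge ij by blast
  then have c: "card {x \<in> mingens I. supp x = {i, j}} = 1" unfolding alpha_def .
  have "g \<in> {x \<in> mingens I. supp x = {i, j}}" "g' \<in> {x \<in> mingens I. supp x = {i, j}}"
    using g g' ij eq by auto
  moreover obtain x where "{x \<in> mingens I. supp x = {i, j}} = {x}" using c by (rule card_1_singletonE)
  ultimately show ?thesis by simp
qed

lemma loc2:
  assumes I: "is_mono_ideal n I"
    and r1: "(\<lambda>l. r1 l + v1 l) \<in> I" and r2: "(\<lambda>l. r2 l + v2 l) \<in> I"
    and v1: "v1 \<in> mons n" "\<forall>l\<in>A. v1 l = 0" and v2: "v2 \<in> mons n" "\<forall>l\<in>A. v2 l = 0"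
    and le: "\<forall>l. r1 l + r2 l \<le> m l" and m: "m \<in> mons n"
  shows "m \<in> localize n A (mpow n I (Suc (Suc 0)))"
proof -
  define Y where "Y = (\<lambda>l. m l - r1 l + v2 l)"
  have Ym: "Y \<in> mons n" using m v2 by (simp add: mons_def Y_def)
  have "(\<lambda>l. r2 l + v2 l) \<le> Y" unfolding le_fun_def Y_def
  proof
    fix l show "r2 l + v2 l \<le> m l - r1 l + v2 l" using le[rule_format, of l] by arith
  qed
  then have YI: "Y \<in> I" using I r2 Ym unfolding is_mono_ideal_def by blast
  have Y1: "Y \<in> mpow n I (Suc 0)"
  proof -
    have z: "(\<lambda>_. 0::nat) \<in> mpow n I 0" by (simp add: mons_def)
    have "Y = (\<lambda>l. Y l + (\<lambda>_. 0::nat) l)" by simp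
    then show ?thesis unfolding mpow.simps(2)
      by (intro CollectI exI[of _ Y] exI[of _ "\<lambda>_. 0::nat"] conjI YI z)
  qed
  have eq: "(\<lambda>l. m l + (v1 l + v2 l)) = (\<lambda>l. (r1 l + v1 l) + Y l)"
  proof
    fix l show "m l + (v1 l + v2 l) = (r1 l + v1 l) + Y l" using le[rule_format, of l] unfolding Y_def by arith
  qed
  have "(\<lambda>l. m l + (v1 l + v2 l)) \<in> mpow n I (Suc (Suc 0))"
    unfolding eq mpow.simps(2)[of n I "Suc 0"]
    by (intro CollectI exI[of _ "\<lambda>l. r1 l + v1 l"] exI[of _ Y] conjI r1 Y1) simp
  moreover have "(\<lambda>l. v1 l + v2 l) \<in> mons n" using v1 v2 by (simp add: mons_def)
  moreover have "\<forall>l\<in>A. v1 l + v2 l = 0" using v1 v2 by simp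
  ultimately show ?thesis unfolding localize_def
    by (intro CollectI conjI m bexI[of _ "\<lambda>l. v1 l + v2 l"]) auto
qed

lemma sub3:
  assumes "S \<subseteq> {i, j, k}" "card S = 2"
  shows "S = {i, j} \<or> S = {i, k} \<or> S = {j, k}"
proof -
  obtain x y where xy: "S = {x, y}" "x \<noteq> y" using assms(2) unfolding card_2_iff by (elim exE conjE) (erule that)
  then have "x \<in> {i, j, k}" "y \<in> {i, j, k}" using assms(1) by auto
  then have "(x = i \<or> x = j \<or> x = k)" "(y = i \<or> y = j \<or> y = k)" by simp_all
  then show ?thesis using xy by (elim disjE) (simp_all add: insert_commute)
qed

lemma tri:
  assumes S2: "support2 n I" and Sim: "simis n I" and mid: "minimal_irr_decomp n I"
    and U: "\<And>g g'. g \<in> mingens I \<Longrightarrow> g' \<in> mingens I \<Longrightarrow> supp g = supp g' \<Longrightarrow> g = g'"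
    and g: "g \<in> mingens I" and h: "h \<in> mingens I"
    and sg: "supp g = {i, j}" and sh: "supp h = {i, k}"
    and ij: "i \<noteq> j" and ik: "i \<noteq> k" and jk: "j \<noteq> k" and lt: "g i < h i"
  shows "\<exists>f\<in>mingens I. supp f = {j, k} \<and> 2 * f j \<le> g j \<and> 2 * f k \<le> h k"
proof -
  have I: "is_mono_ideal n I" using S2 unfolding support2_def by blast
  have gI: "g \<in> I" and hI: "h \<in> I" using g h unfolding mingens_def by blast+
  have gm: "g \<in> mons n" and hm: "h \<in> mons n" using gI hI I unfolding is_mono_ideal_def by blast+
  have gs: "g l \<noteq> 0 \<longleftrightarrow> l = i \<or> l = j" for l using supp_iff[OF sg] by simp
  have hs: "h l \<noteq> 0 \<longleftrightarrow> l = i \<or> l = k" for l using supp_iff[OF sh] by simp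
  have gi: "g i > 0" and gj: "g j > 0" and hi: "h i > 0" and hk: "h k > 0"
    using gs hs by auto
  have hj: "h j = 0" using hs[of j] ij jk by auto
  have gk: "g k = 0" using gs[of k] ik jk by auto
  have i_n: "i < n"
  proof (rule ccontr)
    assume "\<not> i < n" then have "g i = 0" using gm by (simp add: mons_def)
    then show False using gi by simp
  qed
  define m where "m = (\<lambda>l. if l = i then g i + h i - 1 else g l + h l)"
  have mm: "m \<in> mons n" using gm hm i_n by (auto simp: mons_def m_def)
  have mi: "m i = g i + h i - 1" by (simp add: m_def)
  have mo: "l \<noteq> i \<Longrightarrow> m l = g l + h l" for l by (simp add: m_def)
  have "m \<in> localize n A (mpow n I (Suc (Suc 0)))" if A: "A \<in> minprimes n I" for A
  proof -
    obtain G where G: "G \<subseteq> mons n" "\<forall>p\<in>G. card (supp p) = 1" "I \<subseteq> ideal_of n G"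
      and loc: "\<forall>p\<in>G. \<exists>v\<in>mons n. (\<forall>l\<in>A. v l = 0) \<and> (\<lambda>l. p l + v l) \<in> I"
      using comp[OF mid A] by (elim exE conjE) (erule that)
    have "g \<in> ideal_of n G" using G(3) gI by blast
    then obtain p where p: "p \<in> G" "p \<le> g" unfolding ideal_of_def by blast
    have "h \<in> ideal_of n G" using G(3) hI by blast
    then obtain q where q: "q \<in> G" "q \<le> h" unfolding ideal_of_def by blast
    obtain vp where vp: "vp \<in> mons n" "\<forall>l\<in>A. vp l = 0" "(\<lambda>l. p l + vp l) \<in> I" using loc p(1) by blast
    obtain vq where vq: "vq \<in> mons n" "\<forall>l\<in>A. vq l = 0" "(\<lambda>l. q l + vq l) \<in> I" using loc q(1) by blast
    have pg: "p l \<le> g l" for l using p(2) by (simp add: le_fun_def)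
    have qh: "q l \<le> h l" for l using q(2) by (simp add: le_fun_def)
    show ?thesis
    proof (cases "p i = 0 \<or> q i = 0")
      case True
      have "\<forall>l. p l + q l \<le> m l"
      proof
        fix l show "p l + q l \<le> m l"
        proof (cases "l = i")
          case True
          then show ?thesis using \<open>p i = 0 \<or> q i = 0\<close> pg[of i] qh[of i] gi hi mi by auto
        next
          case False
          then show ?thesis using pg[of l] qh[of l] mo[OF False] by simp
        qed
      qed
      then show ?thesis using loc2[OF I vp(3) vq(3) vp(1) vp(2) vq(1) vq(2) _ mm] by blast
    next
      case False
      then have pi: "p i \<noteq> 0" by simp
      have "card (supp p) = 1" using G(2) p(1) by blast
      then obtain l0 where l0: "supp p = {l0}" "p l0 \<noteq> 0" "\<forall>l. l \<noteq> l0 \<longrightarrow> p l = 0"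
        using pure_supp2 by blast
      have "l0 = i" using l0(3)[rule_format, of i] pi by auto
      have "\<forall>l. p l + p l \<le> m l"
      proof
        fix l show "p l + p l \<le> m l"
        proof (cases "l = i")
          case True
          then show ?thesis using pg[of i] lt mi by simp
        next
          case False
          then show ?thesis using l0(3) \<open>l0 = i\<close> by simp
        qed
      qed
      then show ?thesis using loc2[OF I vp(3) vp(3) vp(1) vp(2) vp(1) vp(2) _ mm] by blast
    qed
  qed
  then have "m \<in> symb_pow n I (Suc (Suc 0))" using mm unfolding symb_pow_def by blast
  moreover have "symb_pow n I (Suc (Suc 0)) = mpow n I (Suc (Suc 0))"
    using Sim unfolding simis_def by simp
  ultimately have "m \<in> mpow n I (Suc (Suc 0))" by simp
  then obtain x y y0 where xy: "m = (\<lambda>l. x l + (y l + y0 l))" "x \<in> I" "y \<in> I"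
    by auto
  obtain g1 where g1: "g1 \<in> mingens I" "g1 \<le> x" using exists_mingen[OF I xy(2)] by blast
  obtain g2 where g2: "g2 \<in> mingens I" "g2 \<le> y" using exists_mingen[OF I xy(3)] by blast
  have le: "g1 l + g2 l \<le> m l" for l
  proof -
    have "g1 l \<le> x l" "g2 l \<le> y l" using g1 g2 by (auto simp: le_fun_def)
    then show ?thesis using xy(1) by simp
  qed
  have m0: "m l = 0" if "l \<noteq> i" "l \<noteq> j" "l \<noteq> k" for l
    using mo[OF that(1)] gs[of l] hs[of l] that by simp
  have cases: "g' = g \<or> g' = h \<or> supp g' = {j, k}" if g': "g' \<in> mingens I" "\<forall>l. g' l \<le> m l" for g'
  proof -
    have "supp g' \<subseteq> {i, j, k}"
    proof
      fix l assume "l \<in> supp g'"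
      then have "g' l \<noteq> 0" by (simp add: supp_def)
      then have "m l \<noteq> 0" using g'(2)[rule_format, of l] by auto
      show "l \<in> {i, j, k}"
      proof (rule ccontr)
        assume "l \<notin> {i, j, k}"
        then have "l \<noteq> i" "l \<noteq> j" "l \<noteq> k" by simp_all
        then have "m l = 0" by (rule m0)
        then show False using \<open>m l \<noteq> 0\<close> by simp
      qed
    qed
    moreover have "card (supp g') = 2" using S2 g'(1) unfolding support2_def by blast
    ultimately have "supp g' = {i, j} \<or> supp g' = {i, k} \<or> supp g' = {j, k}" by (rule sub3)
    then show ?thesis
    proof (elim disjE)
      assume "supp g' = {i, j}" then have "supp g' = supp g" using sg by simp
      then show ?thesis using U[OF g'(1) g] by simp
    next
      assume "supp g' = {i, k}" then have "supp g' = supp h" using sh by simp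
      then show ?thesis using U[OF g'(1) h] by simp
    qed simp
  qed
  have b1: "\<forall>l. g1 l \<le> m l"
  proof
    fix l show "g1 l \<le> m l" using le[of l] by simp
  qed
  have b2: "\<forall>l. g2 l \<le> m l"
  proof
    fix l show "g2 l \<le> m l" using le[of l] by simp
  qed
  have c1: "g1 = g \<or> g1 = h \<or> supp g1 = {j, k}" using cases[OF g1(1) b1] .
  have c2: "g2 = g \<or> g2 = h \<or> supp g2 = {j, k}" using cases[OF g2(1) b2] .
  have mj: "m j = g j" using mo[of j] ij hj by simp
  have mk: "m k = h k" using mo[of k] ik gk by simp
  have jk1: "g1 j > 0 \<and> g1 k > 0" if "supp g1 = {j, k}" using supp_iff[OF that] by auto
  have jk2: "g2 j > 0 \<and> g2 k > 0" if "supp g2 = {j, k}" using supp_iff[OF that] by auto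
  have lei: "g1 i + g2 i \<le> g i + h i - 1" using le[of i] mi by simp
  have lej: "g1 j + g2 j \<le> g j" using le[of j] mj by simp
  have lek: "g1 k + g2 k \<le> h k" using le[of k] mk by simp
  have n1: False if "g1 = g"
    using c2
  proof (elim disjE)
    assume "g2 = g" then show False using lej that gj by simp
  next
    assume "g2 = h" then show False using lei that gi hi by simp
  next
    assume "supp g2 = {j, k}" then show False using jk2 lej that by simp
  qed
  have n2: False if "g1 = h"
    using c2
  proof (elim disjE)
    assume "g2 = g" then show False using lei that gi hi by simp
  next
    assume "g2 = h" then show False using lek that hk by simp
  next
    assume "supp g2 = {j, k}" then show False using jk2 lek that by simp
  qed
  have s1: "supp g1 = {j, k}" using c1 n1 n2 by blast
  have n3: False if "g2 = g" using that lej jk1[OF s1] by simp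
  have n4: False if "g2 = h" using that lek jk1[OF s1] by simp
  have s2: "supp g2 = {j, k}" using c2 n3 n4 by blast
  have "g1 = g2" using U[OF g1(1) g2(1)] s1 s2 by simp
  then have "2 * g1 j \<le> g j" "2 * g1 k \<le> h k" using lej lek by simp_all
  then show ?thesis using g1(1) s1 by blast
qed

lemma card2_mem:
  assumes "card S = 2" "i \<in> S"
  shows "\<exists>j. j \<noteq> i \<and> S = {i, j}"
proof -
  obtain x y where xy: "S = {x, y}" "x \<noteq> y" using assms(1) unfolding card_2_iff by (elim exE conjE) (erule that)
  then have "i = x \<or> i = y" using assms(2) by simp
  then show ?thesis
  proof
    assume "i = x" then show ?thesis using xy by (intro exI[of _ y]) auto
  next
    assume "i = y" then have "S = {i, x}" "x \<noteq> i" using xy by (simp_all add: insert_commute)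
    then show ?thesis by (intro exI[of _ x]) auto
  qed
qed

lemma nolt:
  assumes S2: "support2 n I" and Sim: "simis n I" and mid: "minimal_irr_decomp n I"
    and U: "\<And>g g'. g \<in> mingens I \<Longrightarrow> g' \<in> mingens I \<Longrightarrow> supp g = supp g' \<Longrightarrow> g = g'"
    and g: "g \<in> mingens I" and h: "h \<in> mingens I"
    and gi: "g i \<noteq> 0" and hi: "h i \<noteq> 0"
  shows "\<not> g i < h i"
proof
  assume lt: "g i < h i"
  have c: "card (supp g) = 2" "card (supp h) = 2" using S2 g h unfolding support2_def by blast+
  have ii: "i \<in> supp g" "i \<in> supp h" using gi hi by (simp_all add: supp_def)
  have ej: "\<exists>j. j \<noteq> i \<and> supp g = {i, j}" using card2_mem[OF c(1) ii(1)] .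
  have ek: "\<exists>k. k \<noteq> i \<and> supp h = {i, k}" using card2_mem[OF c(2) ii(2)] .
  obtain j where j: "j \<noteq> i" "supp g = {i, j}" using ej by (elim exE conjE) (rule that; assumption)
  obtain k where k: "k \<noteq> i" "supp h = {i, k}" using ek by (elim exE conjE) (rule that; assumption)
  show False
  proof (cases "j = k")
    case True
    then have "supp g = supp h" using j k by simp
    then have "g = h" using U[OF g h] by simp
    then show False using lt by simp
  next
    case False
    obtain f where f: "f \<in> mingens I" "supp f = {j, k}" "2 * f j \<le> g j" "2 * f k \<le> h k"
      using tri[OF S2 Sim mid U g h j(2) k(2) j(1)[symmetric] k(1)[symmetric] False lt] by blast
    have fj: "f j > 0" using supp_iff[OF f(2), of j] by simp
    have "f j < g j" using f(3) fj by simp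
    have sg': "supp g = {j, i}" using j(2) by (simp add: insert_commute)
    obtain f' where f': "f' \<in> mingens I" "supp f' = {k, i}" "2 * f' k \<le> f k" "2 * f' i \<le> g i"
      using tri[OF S2 Sim mid U f(1) g f(2) sg' False j(1) k(1) \<open>f j < g j\<close>] by blast
    have "supp f' = supp h" using f'(2) k(2) by (simp add: insert_commute)
    then have "f' = h" using U[OF f'(1) h] by simp
    then show False using f'(4) lt hi by simp
  qed
qed

definition chi :: "(nat \<Rightarrow> nat) \<Rightarrow> (nat \<Rightarrow> nat)" where
  "chi g = (\<lambda>l. if g l \<noteq> 0 then 1 else 0)"

theorem main_thm:
  fixes n :: nat and I :: "(nat \<Rightarrow> nat) set"
  assumes S2: "support2 n I"
    and Sim: "simis n I"
    and mid: "minimal_irr_decomp n I"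
    and edge: "\<forall>e\<in>edges I. \<forall>i j. e = {i, j} \<longrightarrow> alpha I i j = 1"
  shows "\<exists>J d. squarefree_mono n J \<and> simis n J \<and> (\<forall>i<n. d i > 0) \<and> I = weighted n d J"
proof -
  have I: "is_mono_ideal n I" using S2 unfolding support2_def by blast
  have U: "g = g'" if "g \<in> mingens I" "g' \<in> mingens I" "supp g = supp g'" for g g'
    using uniq[OF S2 edge that] .
  have key: "g l = h l" if "g \<in> mingens I" "h \<in> mingens I" "g l \<noteq> 0" "h l \<noteq> 0" for g h l
  proof -
    have a: "\<not> g l < h l" using nolt[OF S2 Sim mid U that(1) that(2) that(3) that(4)] .
    have b: "\<not> h l < g l" using nolt[OF S2 Sim mid U that(2) that(1) that(4) that(3)] .
    from a b show ?thesis by linarith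
  qed
  have gm: "g \<in> mons n" if "g \<in> mingens I" for g
    using that I unfolding mingens_def is_mono_ideal_def by blast
  define d where "d l = (if \<exists>g\<in>mingens I. g l \<noteq> 0 then (SOME g. g \<in> mingens I \<and> g l \<noteq> 0) l else 1)" for l
  have dg: "d l = g l" if "g \<in> mingens I" "g l \<noteq> 0" for g l
  proof -
    have ex: "\<exists>g. g \<in> mingens I \<and> g l \<noteq> 0" using that by blast
    define sg where "sg = (SOME g. g \<in> mingens I \<and> g l \<noteq> 0)"
    have "sg \<in> mingens I \<and> sg l \<noteq> 0"
      using someI_ex[OF ex] unfolding sg_def .
    then have "sg l = g l" using key[of sg g l] that by blast
    then have "(SOME g. g \<in> mingens I \<and> g l \<noteq> 0) l = g l" unfolding sg_def .
    moreover have "\<exists>g\<in>mingens I. g l \<noteq> 0" using that by blast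
    ultimately show ?thesis unfolding d_def by simp
  qed
  have dpos: "d l > 0" for l
  proof (cases "\<exists>g\<in>mingens I. g l \<noteq> 0")
    case True
    then obtain g where "g \<in> mingens I" "g l \<noteq> 0" by blast
    then show ?thesis using dg by fastforce
  next
    case False then show ?thesis unfolding d_def by simp
  qed
  have wchi: "wt d (chi g) = g" if "g \<in> mingens I" for g
  proof
    fix l show "wt d (chi g) l = g l"
      using dg[OF that, of l] by (simp add: wt_def chi_def)
  qed
  define E where "E = chi ` mingens I"
  define J where "J = ideal_of n E"
  have chim: "chi g \<in> mons n" if "g \<in> mons n" for g using that by (simp add: mons_def chi_def)
  have Em: "E \<subseteq> mons n" unfolding E_def using chim gm by blast
  have ac: "x = y" if hx: "x \<in> E" "y \<in> E" "x \<le> y" for x y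
  proof -
    obtain g where g: "g \<in> mingens I" "x = chi g" using hx(1) unfolding E_def by blast
    obtain h where h: "h \<in> mingens I" "y = chi h" using hx(2) unfolding E_def by blast
    have "supp g \<subseteq> supp h"
    proof
      fix l assume "l \<in> supp g"
      then have "chi g l = 1" by (simp add: supp_def chi_def)
      moreover have "chi g l \<le> chi h l" using hx(3) g(2) h(2) by (simp add: le_fun_def)
      ultimately have "chi h l \<noteq> 0" by simp
      then show "l \<in> supp h" by (simp add: supp_def chi_def split: if_splits)
    qed
    moreover have "card (supp g) = 2" "card (supp h) = 2" using S2 g h unfolding support2_def by blast+
    moreover have "finite (supp h)" using calculation(3) card.infinite by fastforce
    ultimately have "supp g = supp h" using card_subset_eq[of "supp h" "supp g"] by simp
    then have "g = h" using U[OF g(1) h(1)] by simp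
    then show ?thesis using g h by simp
  qed
  have mJ: "mingens J = E" unfolding J_def using mingens_antichain[OF Em ac] by blast
  have Jid: "is_mono_ideal n J" unfolding J_def by (rule ideal_of_ideal)
  have sqf: "squarefree_mono n J"
    unfolding squarefree_mono_def using Jid mJ by (auto simp: E_def chi_def)
  have img: "(\<lambda>g i. d i * g i) ` mingens J = mingens I"
  proof -
    have "(\<lambda>g i. d i * g i) = wt d" by (simp add: wt_def fun_eq_iff)
    then have "(\<lambda>g i. d i * g i) ` mingens J = (\<lambda>g. wt d (chi g)) ` mingens I"
      using mJ unfolding E_def by (simp add: image_image wt_def)
    also have "\<dots> = mingens I" using wchi by simp
    finally show ?thesis .
  qed
  have weq: "I = weighted n d J"
    unfolding weighted_def img using ideal_of_mingens[OF I] by simp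
  have R: "Rel n d J I" unfolding Rel_def
  proof (intro ballI iffI)
    fix b' assume b': "b' \<in> mons n" "b' \<in> I"
    then obtain g where g: "g \<in> mingens I" "g \<le> b'" using exists_mingen[OF I] by blast
    have "chi g \<in> J" unfolding J_def ideal_of_def E_def using chim[OF gm[OF g(1)]] g(1) by blast
    moreover have "wt d (chi g) \<le> b'" using wchi[OF g(1)] g(2) by simp
    ultimately show "\<exists>b\<in>J. wt d b \<le> b'" by blast
  next
    fix b' assume b': "b' \<in> mons n" "\<exists>b\<in>J. wt d b \<le> b'"
    then obtain b where b: "b \<in> J" "wt d b \<le> b'" by blast
    then obtain g where g: "g \<in> mingens I" "chi g \<le> b" unfolding J_def ideal_of_def E_def by blast
    have "wt d (chi g) \<le> wt d b" using g(2) by (simp add: le_fun_def wt_def)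
    then have "g \<le> b'" using wchi[OF g(1)] b(2) by simp
    moreover have "g \<in> I" using g(1) unfolding mingens_def by blast
    ultimately show "b' \<in> I" using I b'(1) unfolding is_mono_ideal_def by blast
  qed
  have dp: "\<forall>i<n. d i > 0" using dpos by simp
  have sJ: "simis n J" using Rel_simis[OF Jid I R dp Sim] .
  have "squarefree_mono n J \<and> simis n J \<and> (\<forall>i<n. d i > 0) \<and> I = weighted n d J"
    using sqf sJ dp weq by (intro conjI)
  then show ?thesis by (intro exI)
qed

theorem lemma2p1:
  fixes n :: nat and I :: "(nat \<Rightarrow> nat) set"
  assumes "support2 n I"
    and "simis n I"
    and "minimal_irr_decomp n I"
    and "\<forall>e\<in>edges I. \<forall>i j. e = {i, j} \<longrightarrow> alpha I i j = 1"
  shows "\<exists>J d. squarefree_mono n J \<and> simis n J \<and> (\<forall>i<n. d i > 0) \<and> I = weighted n d J"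
  using main_thm[OF assms] .

end
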